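(* Let $m>1$ be a multiperfect number, i.e. $m\mid\sigma(m)$. Write $m=\prod_{i=1}^{s} p_i^{e_i}$ with distinct primes $p_i$ and exponents $e_i\ge 1$, and let $L=\operatorname{lcm}(e_1+1,\dots,e_s+1)$. If $L$ is prime, then $m=6$.
   Context: $\sigma(n)=\sum_{d\mid n} d$ denotes the sum-of-divisors function. *)

theory Defs
  imports "HOL-Computational_Algebra.Primes"
begin

definition divisor_sum :: "nat \<Rightarrow> nat" where
  "divisor_sum n = (\<Sum>d \<in> {d. d dvd n}. d)"

end

theory Submission
  imports Defs "HOL-Number_Theory.Number_Theory"
begin


lemma divisors_fin: "n > 0 \<Longrightarrow> finite {d::nat. d dvd n}"
  by (simp add: finite_divisors_nat)

lemma sigma_mult:
  fixes a b :: nat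
  assumes "coprime a b" "a > 0" "b > 0"
  shows "divisor_sum (a*b) = divisor_sum a * divisor_sum b"
proof -
  let ?f = "\<lambda>(x,y). x*(y::nat)"
  have img: "{d. d dvd a*b} = ?f ` ({d. d dvd a} \<times> {d. d dvd b})"
  proof
    show "{d. d dvd a*b} \<subseteq> ?f ` ({d. d dvd a} \<times> {d. d dvd b})"
    proof
      fix d assume "d \<in> {d. d dvd a*b}"
      then have "d dvd a*b" by simp
      then obtain x y where "d = x*y" "x dvd a" "y dvd b" using division_decomp by blast
      then show "d \<in> ?f ` ({d. d dvd a} \<times> {d. d dvd b})" by force
    qed
  next
    show "?f ` ({d. d dvd a} \<times> {d. d dvd b}) \<subseteq> {d. d dvd a*b}"
      by (clarsimp simp: mult_dvd_mono)
  qed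
  have inj: "inj_on ?f ({d. d dvd a} \<times> {d. d dvd b})"
  proof (rule inj_onI, clarsimp)
    fix x y u v :: nat assume h: "x dvd a" "y dvd b" "u dvd a" "v dvd b" "x*y = u*v"
    have c1: "coprime a y" "coprime a v" using h assms(1)
      by (meson coprime_divisors dvd_refl)+
    have c2: "coprime b x" "coprime b u" using h assms(1)
      by (meson coprime_commute coprime_divisors dvd_refl)+
    have "gcd (x*y) a = x" using gcd_mult_left_right_cancel[OF c1(1), of x] h(1)
      by (simp add: gcd_nat.absorb1)
    moreover have "gcd (u*v) a = u" using gcd_mult_left_right_cancel[OF c1(2), of u] h(3)
      by (simp add: gcd_nat.absorb1)
    moreover have "gcd (x*y) b = y" using gcd_mult_left_left_cancel[OF c2(1), of y] h(2)
      by (simp add: gcd_nat.absorb1)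
    moreover have "gcd (u*v) b = v" using gcd_mult_left_left_cancel[OF c2(2), of v] h(4)
      by (simp add: gcd_nat.absorb1)
    ultimately show "x = u \<and> y = v" using h(5) by metis
  qed
  have "divisor_sum (a*b) = (\<Sum>p\<in>{d. d dvd a} \<times> {d. d dvd b}. ?f p)"
    unfolding divisor_sum_def img using sum.reindex[OF inj, of id] by simp
  also have "\<dots> = (\<Sum>x\<in>{d. d dvd a}. \<Sum>y\<in>{d. d dvd b}. x*y)"
    by (simp add: sum.cartesian_product)
  also have "\<dots> = divisor_sum a * divisor_sum b"
    unfolding divisor_sum_def by (simp add: sum_product)
  finally show ?thesis .
qed

lemma sigma_pp:
  fixes p :: nat assumes "prime p"
  shows "divisor_sum (p^k) = (\<Sum>i<Suc k. p^i)"
proof -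
  have "{d. d dvd p^k} = (\<lambda>i. p^i) ` {..<Suc k}"
    using divides_primepow_nat[OF assms] by (auto simp: less_Suc_eq_le)
  moreover have "inj_on (\<lambda>i. p^i) {..<Suc k}"
    using assms prime_gt_1_nat by (auto intro!: inj_onI simp: power_inject_exp)
  ultimately show ?thesis unfolding divisor_sum_def by (simp add: sum.reindex)
qed

lemma sigma_prod:
  fixes P :: "nat set"
  assumes "finite P" "\<forall>p\<in>P. prime p"
  shows "divisor_sum (\<Prod>p\<in>P. p^e) = (\<Prod>p\<in>P. divisor_sum (p^e))"
  using assms
proof (induction P rule: finite_induct)
  case empty
  have "{d::nat. d dvd 1} = {1}" by auto
  then show ?case by (simp add: divisor_sum_def)
next
  case (insert x F)
  have px: "prime x" using insert by simp
  have "coprime (x^e) (\<Prod>p\<in>F. p^e)"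
  proof -
    have "\<forall>p\<in>F. coprime x (p^e)" using insert
      by (metis coprime_power_right_iff insert_iff primes_coprime)
    then have "coprime x (\<Prod>p\<in>F. p^e)" by (metis prod_coprime_right)
    then show ?thesis by simp
  qed
  moreover have "(\<Prod>p\<in>F. p^e) > 0" using insert
    by (metis prime_gt_0_nat insert_iff prod_pos zero_less_power)
  ultimately show ?case using insert px prime_gt_0_nat
    by (simp add: sigma_mult)
qed



definition cyc :: "nat \<Rightarrow> nat \<Rightarrow> nat" where "cyc q p = (\<Sum>i<q. p^i)"

lemma cyc_geom: "p \<ge> 1 \<Longrightarrow> cyc q p * (p - 1) + 1 = p^q"
proof (induction q)
  case 0 then show ?case by (simp add: cyc_def)
next
  case (Suc n)
  have "cyc (Suc n) p = cyc n p + p^n" by (simp add: cyc_def)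
  then have "cyc (Suc n) p * (p - 1) + 1 = (cyc n p * (p-1) + 1) + p^n * (p - 1)"
    by (simp add: algebra_simps)
  also have "\<dots> = p^n + p^n*(p-1)" using Suc by simp
  also have "\<dots> = p^Suc n" using Suc.prems by (cases p) (auto simp: algebra_simps)
  finally show ?case .
qed

lemma cyc_odd: assumes "odd q" shows "odd (cyc q p)"
proof (cases "even p")
  case True
  have "{i\<in>{..<q}. odd (p^i)} = {0}" using True assms by (auto simp: odd_pos)
  then show ?thesis unfolding cyc_def by (simp add: even_sum_iff)
next
  case False
  have "{i\<in>{..<q}. odd (p^i)} = {..<q}" using False by auto
  then show ?thesis unfolding cyc_def using assms by (simp add: even_sum_iff)
qed

lemma cyc_cong1: assumes "[a = 1] (mod r)" shows "[cyc q a = q] (mod r)"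
proof -
  have "[(\<Sum>i<q. a^i) = (\<Sum>i<q. 1^i)] (mod r)"
    by (intro cong_sum cong_pow assms)
  then show ?thesis by (simp add: cyc_def)
qed

lemma cyc_prime_div:
  assumes "prime q" "prime r" "a \<ge> 1" "r dvd cyc q a"
  shows "r = q \<or> q dvd r - 1"
proof -
  have e: "cyc q a * (a - 1) + 1 = a^q" using cyc_geom assms(3) by blast
  have "r dvd a^q - 1" using e assms(4) by (metis add_diff_cancel_right' dvd_mult2)
  then have c: "[a^q = 1] (mod r)" using e by (subst cong_altdef_nat) auto
  have nd: "\<not> r dvd a"
  proof
    assume "r dvd a"
    moreover have "a^q = a * a^(q-1)" using prime_gt_0_nat[OF assms(1)] by (simp add: power_eq_if)
    ultimately have "r dvd a^q" by simp
    then have "r dvd 1" using \<open>r dvd a^q - 1\<close> e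
      by (metis add_diff_cancel_left' dvd_diff_nat plus_1_eq_Suc add.commute)
    then show False using assms(2) by simp
  qed
  have "ord r a dvd q" using c ord_divides by blast
  then have "ord r a = 1 \<or> ord r a = q" using assms(1) prime_nat_iff by blast
  then show ?thesis
  proof
    assume "ord r a = 1"
    then have "[a = 1] (mod r)" using ord[of a r] by simp
    then have "[cyc q a = q] (mod r)" by (rule cyc_cong1)
    then have "r dvd q" using assms(4) by (metis cong_dvd_iff)
    then have "r = q" using assms(1,2) by (simp add: primes_dvd_imp_eq)
    then show ?thesis by simp
  next
    assume "ord r a = q"
    moreover have "[a^(r-1) = 1] (mod r)" using fermat_theorem[OF assms(2) nd] .
    ultimately show ?thesis using ord_divides by metis
  qed
qed

lemma cyc_q_dvd: assumes "q dvd p - 1" "p \<ge> 1" shows "q dvd cyc q p"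
proof -
  have "[p = 1] (mod q)" using assms by (subst cong_altdef_nat) auto
  then have "[cyc q p = q] (mod q)" by (rule cyc_cong1)
  then show ?thesis using cong_dvd_iff dvd_refl by blast
qed

lemma cyc_lower: "q \<ge> 2 \<Longrightarrow> p^(q-1) < cyc q p"
proof -
  assume "q \<ge> 2"
  then have "{0, q-1} \<subseteq> {..<q}" "0 \<noteq> q - 1" by auto
  then have "(\<Sum>i\<in>{0,q-1}. p^i) \<le> (\<Sum>i<q. p^i)" by (intro sum_mono2) auto
  then show ?thesis using \<open>0 \<noteq> q - 1\<close> by (simp add: cyc_def)
qed

lemma cyc_upper1: assumes "q \<ge> 2" "p \<ge> 2" shows "cyc q p < q * p^(q-1)"
proof -
  define d where "d = p - 1"
  have pd: "p = d + 1" "d \<ge> 1" using assms d_def by auto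
  have a: "cyc q p * d + 1 = p^q" using cyc_geom assms d_def by simp
  have b: "p^q = p * p^(q-1)" using assms by (metis Suc_diff_1 less_le_trans pos2 power_Suc)
  have "2 * d \<le> q * d" using assms by simp
  then have c: "p \<le> q * d" using pd by linarith
  have "cyc q p * d < p * p^(q-1)" using a b by linarith
  also have "\<dots> \<le> (q * d) * p^(q-1)" using c by (rule mult_le_mono1)
  finally have "cyc q p * d < (q * p^(q-1)) * d" by (simp add: ac_simps)
  then show ?thesis by (rule mult_less_cancel2[THEN iffD1, THEN conjunct2])
qed

lemma cyc_upper2: assumes "q \<ge> 2" "p \<ge> 2*q+1" shows "2*q*cyc q p < (2*q+1) * p^(q-1)"
proof -
  define d where "d = p - 1"
  have pd: "p = d + 1" "d \<ge> 2*q" using assms d_def by auto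
  have a: "cyc q p * d + 1 = p^q" using cyc_geom assms d_def by simp
  have b: "p^q = p * p^(q-1)" using assms by (metis Suc_diff_1 less_le_trans pos2 power_Suc)
  have c: "2*q*p \<le> (2*q+1) * d" using pd by (simp add: algebra_simps)
  have "(2*q*cyc q p) * d < 2*q*p^q"
  proof -
    have "cyc q p * d < p^q" using a by linarith
    then show ?thesis using assms by simp
  qed
  also have "\<dots> = (2*q*p) * p^(q-1)" using b by simp
  also have "\<dots> \<le> ((2*q+1) * d) * p^(q-1)" using c by (rule mult_le_mono1)
  finally have "(2*q*cyc q p) * d < ((2*q+1) * p^(q-1)) * d" by (simp only: ac_simps)
  then show ?thesis by (rule mult_less_cancel2[THEN iffD1, THEN conjunct2])
qed

lemma cyc_upper3: assumes "q \<ge> 3" shows "2*cyc q q < 3 * q^(q-1)"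
proof -
  define d where "d = q - 1"
  have pd: "q = d + 1" "d \<ge> 2" using assms d_def by auto
  have a: "cyc q q * d + 1 = q^q" using cyc_geom assms d_def by simp
  have b: "q^q = q * q^(q-1)" using pd(1) by (metis diff_Suc_1 power_Suc Suc_eq_plus1)
  have c: "2*q \<le> 3 * d" using pd by linarith
  have "(2*cyc q q) * d < 2*q^q"
  proof -
    have "cyc q q * d < q^q" using a by linarith
    then show ?thesis by simp
  qed
  also have "\<dots> = (2*q) * q^(q-1)" using b by simp
  also have "\<dots> \<le> (3 * d) * q^(q-1)" using c by (rule mult_le_mono1)
  finally have "(2*cyc q q) * d < (3 * q^(q-1)) * d" by (simp only: ac_simps)
  then show ?thesis by (rule mult_less_cancel2[THEN iffD1, THEN conjunct2])
qed

lemma bern: "n \<le> N \<Longrightarrow> (N+1)^n * (N - n) \<le> (N::nat)^(n+1)"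
proof (induction n)
  case 0 then show ?case by simp
next
  case (Suc n)
  then have ih: "(N+1)^n * (N - n) \<le> N^(n+1)" by simp
  have "(N+1)^Suc n * (N - Suc n) * (N - n) = ((N+1)^n * (N - n)) * ((N+1)*(N - Suc n))"
    by (simp only: power_Suc ac_simps)
  also have "\<dots> \<le> N^(n+1) * ((N+1)*(N - Suc n))" using ih by simp
  also have "\<dots> \<le> N^(n+1) * (N * (N - n))"
  proof -
    have "(N+1)*(N - Suc n) \<le> N * (N - n)" using Suc.prems
      by (simp add: algebra_simps diff_mult_distrib2)
    then show ?thesis by simp
  qed
  also have "\<dots> = N^(Suc n + 1) * (N - n)" by (simp add: mult.assoc mult.left_commute mult.commute)
  finally show ?case using Suc.prems by simp
qed

lemma arith_final:
  fixes q k r :: nat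
  assumes "q \<ge> 3" "k \<ge> q" "q \<le> r \<longrightarrow> q^(r-q+1) \<le> k"
  shows "3*(2*q+1)^r \<le> 2*k*(2*q)^r"
proof (cases "r < q")
  case True
  have "(2*q+1)^r * (2*q - r) \<le> (2*q)^(r+1)" using bern[of r "2*q"] True by simp
  then have h2: "(2*q - r) * (2*q+1)^r \<le> (2*q)^(r+1)" by (simp only: mult.commute)
  have "3 \<le> 2*q - r" using True assms by simp
  then have h1: "3*(2*q+1)^r \<le> (2*q - r) * (2*q+1)^r" by (rule mult_le_mono1)
  from h1 h2 have "3*(2*q+1)^r \<le> (2*q)^(r+1)" by (rule order_trans)
  also have "\<dots> = 2*q*(2*q)^r" by simp
  also have "\<dots> \<le> 2*k*(2*q)^r" using assms by simp
  finally show ?thesis .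
next
  case False
  have "3*(2*q+1)^(q+j) \<le> 2*q^(j+1)*(2*q)^(q+j)" for j
  proof (induction j)
    case 0
    have "(2*q+1)^q * (2*q - q) \<le> (2*q)^(q+1)" using bern[of q "2*q"] by simp
    then have "(2*q+1)^q * q \<le> (2*q)^(q+1)" by simp
    then have h2: "q*(2*q+1)^q \<le> (2*q)^(q+1)" by (simp only: mult.commute)
    have h1: "3*(2*q+1)^q \<le> q*(2*q+1)^q" using assms(1) by (rule mult_le_mono1)
    from h1 h2 have "3*(2*q+1)^q \<le> (2*q)^(q+1)" by (rule order_trans)
    then show ?case by simp
  next
    case (Suc j)
    have "3*(2*q+1)^(q+Suc j) = (3*(2*q+1)^(q+j)) * (2*q+1)" by simp
    also have "\<dots> \<le> (2*q^(j+1)*(2*q)^(q+j)) * (2*q+1)" using Suc.IH by (rule mult_le_mono1)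
    also have "\<dots> \<le> (2*q^(j+1)*(2*q)^(q+j)) * (q*(2*q))"
    proof -
      have "3*(2*q) \<le> q*(2*q)" using assms(1) by (rule mult_le_mono1)
      then have "2*q+1 \<le> q*(2*q)" using assms(1) by linarith
      then show ?thesis by (rule mult_le_mono2)
    qed
    also have "\<dots> = 2*q^(Suc j+1)*(2*q)^(q+Suc j)" by (simp add: algebra_simps)
    finally show ?case .
  qed
  from this[of "r - q"] False have "3*(2*q+1)^r \<le> 2*q^(r-q+1)*(2*q)^r" by simp
  also have "\<dots> \<le> 2*k*(2*q)^r" using assms False by simp
  finally show ?thesis .
qed



lemma case2:
  fixes P :: "nat set"
  assumes fin: "finite P" and ne: "P \<noteq> {}" and pr: "\<forall>p\<in>P. prime p"
    and dv: "(\<Prod>p\<in>P. p) dvd (\<Prod>p\<in>P. p+1)"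
  shows "(\<Prod>p\<in>P. p) = 6"
proof -
  define M where "M = Max P"
  have MP: "M \<in> P" using fin ne unfolding M_def by (rule Max_in)
  have Mmax: "\<forall>p\<in>P. p \<le> M" using fin unfolding M_def by simp
  have pM: "prime M" using MP pr by simp
  have "M dvd (\<Prod>p\<in>P. p)" using dvd_prodI[OF fin MP, of "\<lambda>p. p"] by simp
  then have "M dvd (\<Prod>p\<in>P. p+1)" using dv by (rule dvd_trans)
  then have "\<exists>x\<in>P. M dvd x+1" using prime_dvd_prod_iff[OF fin pM, of "\<lambda>p. p+1"] by simp
  then obtain p where pP: "p \<in> P" and Mp: "M dvd p+1" by blast
  have pp: "prime p" using pP pr by simp
  have "p \<noteq> M"
  proof
    assume "p = M"
    then have "M dvd M + 1" using Mp by simp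
    then have "M dvd 1" using dvd_add_right_iff[of M M 1] by simp
    then show False using pM by simp
  qed
  then have "p < M" using Mmax pP by (simp add: le_neq_implies_less)
  moreover have "M \<le> p + 1" using Mp by (simp add: dvd_imp_le)
  ultimately have M1: "M = p + 1" by simp
  have p2: "p = 2"
  proof (rule ccontr)
    assume "p \<noteq> 2"
    moreover have "p \<ge> 2" using prime_gt_1_nat[OF pp] by simp
    ultimately have "odd p" using pp prime_odd_nat by simp
    then have "even M" using M1 by simp
    moreover have "M > 2" using M1 \<open>p \<ge> 2\<close> by simp
    ultimately show False using pM prime_odd_nat by simp
  qed
  have M3: "M = 3" using M1 p2 by simp
  have "P \<subseteq> {2,3}"
  proof
    fix x assume "x \<in> P"
    then have "prime x" "x \<le> 3" using pr Mmax M3 by auto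
    moreover have "2 \<le> x" using prime_gt_1_nat[OF \<open>prime x\<close>] by simp
    ultimately have "x = 2 \<or> x = 3" by presburger
    then show "x \<in> {2,3}" by simp
  qed
  moreover have "{2,3} \<subseteq> P" using pP p2 MP M3 by simp
  ultimately have "P = {2,3}" by blast
  then show ?thesis by simp
qed

lemma qpow_dvd:
  fixes Q :: "nat set"
  assumes "finite Q" "\<forall>p\<in>Q. q dvd p - 1 \<and> p \<ge> 1"
  shows "q^card Q dvd (\<Prod>p\<in>Q. cyc q p)"
proof -
  have "(\<Prod>p\<in>Q. q) dvd (\<Prod>p\<in>Q. cyc q p)"
    by (rule prod_dvd_prod) (use assms cyc_q_dvd in blast)
  then show ?thesis by simp
qed

lemma coprime_q_prod:
  fixes Q :: "nat set"
  assumes "prime q" "\<forall>p\<in>Q. prime p" "q \<notin> Q"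
  shows "coprime (q^n) (\<Prod>p\<in>Q. p^e)"
proof -
  have "\<forall>p\<in>Q. coprime q (p^e)"
  proof
    fix p assume "p \<in> Q"
    then have "prime p" "p \<noteq> q" using assms by auto
    then have "coprime q p" using assms(1) primes_coprime by metis
    then show "coprime q (p^e)" by simp
  qed
  then have "coprime q (\<Prod>p\<in>Q. p^e)" by (metis prod_coprime_right)
  then show ?thesis by simp
qed

lemma case_odd:
  fixes P :: "nat set" and q :: nat
  assumes fin: "finite P" and ne: "P \<noteq> {}" and pr: "\<forall>p\<in>P. prime p"
    and pq: "prime q" and q3: "q \<ge> 3"
    and dv: "(\<Prod>p\<in>P. p^(q-1)) dvd (\<Prod>p\<in>P. cyc q p)"
  shows False
proof -
  define m where "m = (\<Prod>p\<in>P. p^(q-1))"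
  define S where "S = (\<Prod>p\<in>P. cyc q p)"
  have oq: "odd q" using prime_odd_nat[OF pq] q3 by simp
  have p1: "p \<ge> 2" if "p \<in> P" for p using pr that prime_ge_2_nat by blast
  have Sodd: "odd S" unfolding S_def using even_prod_iff[OF fin, of "cyc q"] cyc_odd[OF oq] by simp
  have m0: "m > 0" unfolding m_def
  proof (rule prod_pos)
    fix p assume "p \<in> P"
    then have "p > 0" using p1[of p] by simp
    then show "0 < p^(q-1)" by simp
  qed
  obtain k where k: "S = m * k" using dv unfolding m_def S_def by (rule dvdE)
  have pm: "p dvd S" if "p \<in> P" for p
  proof -
    have "p dvd p^(q-1)" using q3 by (simp add: dvd_power)
    also have "p^(q-1) dvd m" unfolding m_def using dvd_prodI[OF fin that, of "\<lambda>p. p^(q-1)"] by simp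
    also have "m dvd S" using k by simp
    finally show ?thesis .
  qed
  have primeS: "r = q \<or> q dvd r - 1" if "prime r" "r dvd S" for r
  proof -
    have "\<exists>a\<in>P. r dvd cyc q a" using that prime_dvd_prod_iff[OF fin \<open>prime r\<close>, of "cyc q"]
      unfolding S_def by simp
    then obtain a where a: "a \<in> P" "r dvd cyc q a" by blast
    then have "a \<ge> 1" using p1[OF a(1)] by simp
    then show ?thesis using cyc_prime_div[OF pq \<open>prime r\<close> _ a(2)] by simp
  qed
  have Podd: "odd p" if "p \<in> P" for p
  proof
    assume "even p"
    then have "2 dvd S" using pm[OF that] by (rule dvd_trans)
    then show False using Sodd by simp
  qed
  have Pform: "p = q \<or> (q dvd p - 1 \<and> p \<ge> 2*q+1)" if "p \<in> P" for p
  proof -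
    have "p = q \<or> q dvd p - 1" using primeS pm that pr by simp
    moreover have "2*q \<le> p - 1" if "q dvd p - 1"
    proof -
      have "2 dvd p - 1" using Podd[OF \<open>p \<in> P\<close>] p1[OF \<open>p \<in> P\<close>] by simp
      moreover have "coprime 2 q" using oq by simp
      ultimately have "2*q dvd p - 1" using that divides_mult[of 2 "p-1" q] by simp
      moreover have "p - 1 > 0" using p1[OF \<open>p \<in> P\<close>] by simp
      ultimately show ?thesis by (simp add: dvd_imp_le)
    qed
    ultimately show ?thesis by auto
  qed
  obtain i where iP: "i \<in> P" using ne by blast
  have Sm: "m < S" unfolding m_def S_def
  proof (rule prod_mono_strict)
    show "i \<in> P" by (rule iP)
    show "i^(q-1) < cyc q i" using cyc_lower q3 by simp
    show "finite P" by (rule fin)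
    show "\<And>i. i \<in> P \<Longrightarrow> 0 \<le> i^(q-1) \<and> i^(q-1) \<le> cyc q i" using cyc_lower q3
      by (simp add: less_imp_le)
    show "\<And>i. i \<in> P \<Longrightarrow> 0 < cyc q i"
    proof -
      fix i have "i^(q-1) < cyc q i" using cyc_lower q3 by simp
      then show "0 < cyc q i" by simp
    qed
  qed
  have kq: "k \<ge> q"
  proof -
    have "k \<noteq> 1" using Sm k by simp
    then obtain r where r: "prime r" "r dvd k" using prime_factor_nat by blast
    have "k > 0" using Sm k by (cases k) auto
    then have "r \<le> k" using r by (simp add: dvd_imp_le)
    have "r dvd S" using r k by simp
    then have "r = q \<or> q dvd r - 1" using primeS r by simp
    moreover have "r - 1 > 0" using prime_gt_1_nat[OF r(1)] by simp
    ultimately have "q \<le> r" by (auto dest: dvd_imp_le)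
    then show ?thesis using \<open>r \<le> k\<close> by simp
  qed
  have k0: "k > 0" using Sm k by (cases k) auto
  have cpos: "0 < cyc q p" for p
  proof -
    have "p^(q-1) < cyc q p" using cyc_lower q3 by simp
    then show ?thesis by simp
  qed
  show False
  proof (cases "q \<in> P")
    case False
    have allq: "\<forall>p\<in>P. q dvd p - 1 \<and> p \<ge> 1"
      using Pform False p1 by fastforce
    have "q^card P dvd S" unfolding S_def using qpow_dvd[OF fin allq] .
    moreover have "coprime (q^card P) m" unfolding m_def using coprime_q_prod[OF pq pr False] .
    ultimately have "q^card P dvd k" using k coprime_dvd_mult_right_iff by metis
    then have A: "q^card P \<le> k" using k0 by (simp add: dvd_imp_le)
    have "S < (\<Prod>p\<in>P. q * p^(q-1))" unfolding S_def
    proof (rule prod_mono_strict)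
      show "i \<in> P" by (rule iP)
      show "cyc q i < q * i^(q-1)" using cyc_upper1 q3 p1[OF iP] by simp
      show "finite P" by (rule fin)
      show "\<And>i. i \<in> P \<Longrightarrow> 0 \<le> cyc q i \<and> cyc q i \<le> q * i^(q-1)"
      proof -
        fix i assume "i \<in> P"
        then have "cyc q i < q * i^(q-1)" using cyc_upper1 q3 p1[of i] by simp
        then show "0 \<le> cyc q i \<and> cyc q i \<le> q * i^(q-1)" by simp
      qed
      show "\<And>i. i \<in> P \<Longrightarrow> 0 < q * i^(q-1)"
      proof -
        fix i assume "i \<in> P"
        then have "i > 0" using p1[of i] by simp
        then show "0 < q * i^(q-1)" using q3 by simp
      qed
    qed
    also have "\<dots> = q^card P * m" unfolding m_def by (simp add: prod.distrib)
    also have "\<dots> \<le> k * m" using A by simp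
    finally show False using k by (simp add: mult.commute)
  next
    case True
    define P' where "P' = P - {q}"
    define r where "r = card P'"
    define m' where "m' = (\<Prod>p\<in>P'. p^(q-1))"
    define S' where "S' = (\<Prod>p\<in>P'. cyc q p)"
    have finP': "finite P'" using fin P'_def by simp
    have prP': "\<forall>p\<in>P'. prime p" using pr P'_def by simp
    have qP': "q \<notin> P'" using P'_def by simp
    have mm: "m = q^(q-1) * m'" unfolding m_def m'_def P'_def using prod.remove[OF fin True] by simp
    have SS: "S = cyc q q * S'" unfolding S_def S'_def P'_def using prod.remove[OF fin True] by simp
    have allq: "\<forall>p\<in>P'. q dvd p - 1 \<and> p \<ge> 2*q+1"
      using Pform P'_def by fastforce
    then have allq1: "\<forall>p\<in>P'. q dvd p - 1 \<and> p \<ge> 1" by fastforce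
    have qS': "q^r dvd S'" unfolding S'_def r_def using qpow_dvd[OF finP' allq1] .
    have cop: "coprime (q^r) m'" unfolding m'_def using coprime_q_prod[OF pq prP' qP'] .
    have m'0: "m' > 0" using m0 mm by simp
    have kb: "q \<le> r \<longrightarrow> q^(r-q+1) \<le> k"
    proof
      assume "q \<le> r"
      have "q^r dvd S" using qS' SS by simp
      then have "q^r dvd m' * (q^(q-1) * k)" using k mm by (simp add: ac_simps)
      then have "q^r dvd q^(q-1) * k" using cop coprime_dvd_mult_right_iff by metis
      moreover have "q^r = q^(q-1) * q^(r-q+1)"
      proof -
        have e: "(q-1)+(r-q+1) = r" using \<open>q \<le> r\<close> q3 by simp
        show ?thesis using power_add[of q "q-1" "r-q+1"] unfolding e by simp
      qed
      ultimately have "q^(q-1) * q^(r-q+1) dvd q^(q-1) * k" by simp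
      then have "q^(r-q+1) dvd k" using q3 by simp
      then show "q^(r-q+1) \<le> k" using k0 by (simp add: dvd_imp_le)
    qed
    have F: "3*(2*q+1)^r \<le> 2*k*(2*q)^r" using arith_final[OF q3 kq kb] .
    have "(2*(2*q)^r) * S' = (\<Prod>p\<in>P'. 2*q*cyc q p) * 2"
      unfolding S'_def r_def by (simp add: prod.distrib)
    also have "\<dots> \<le> (\<Prod>p\<in>P'. (2*q+1) * p^(q-1)) * 2"
    proof -
      have "(\<Prod>p\<in>P'. 2*q*cyc q p) \<le> (\<Prod>p\<in>P'. (2*q+1) * p^(q-1))"
      proof (rule prod_mono)
        fix p assume "p \<in> P'"
        then have "p \<ge> 2*q+1" using allq by simp
        then have "2*q*cyc q p < (2*q+1) * p^(q-1)" using cyc_upper2 q3 by simp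
        then show "0 \<le> 2*q*cyc q p \<and> 2*q*cyc q p \<le> (2*q+1) * p^(q-1)" by simp
      qed
      then show ?thesis by simp
    qed
    also have "\<dots> = ((2*q+1)^r * m') * 2"
      unfolding m'_def r_def by (simp only: prod.distrib prod_constant)
    finally have B1: "(2*(2*q)^r) * S' \<le> ((2*q+1)^r * m') * 2" .
    have "(2*k*(2*q)^r) * (q^(q-1)*m') = (2*(2*q)^r) * S"
      using k mm by (simp add: ac_simps)
    also have "\<dots> = cyc q q * ((2*(2*q)^r) * S')" using SS by (simp only: ac_simps)
    also have "\<dots> \<le> cyc q q * (((2*q+1)^r * m') * 2)" using B1 by (rule mult_le_mono2)
    also have "\<dots> = (2*cyc q q) * ((2*q+1)^r * m')" by (simp only: ac_simps)
    also have "\<dots> < (3*q^(q-1)) * ((2*q+1)^r * m')"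
    proof (rule mult_less_mono1)
      show "2*cyc q q < 3*q^(q-1)" using cyc_upper3[OF q3] .
      show "0 < (2*q+1)^r * m'" using m'0 by simp
    qed
    also have "\<dots> = (3*(2*q+1)^r) * (q^(q-1)*m')" by (simp only: ac_simps)
    finally have "(2*k*(2*q)^r) * (q^(q-1)*m') < (3*(2*q+1)^r) * (q^(q-1)*m')" .
    then have "2*k*(2*q)^r < 3*(2*q+1)^r"
      by (rule mult_less_cancel2[THEN iffD1, THEN conjunct2])
    then show False using F by simp
  qed
qed



theorem mainTheorem2:
  fixes m :: nat
  assumes "m > 1"
    and "m dvd divisor_sum m"
    and "prime (Lcm ((\<lambda>p. multiplicity p m + 1) ` prime_factors m))"
  shows "m = 6"
proof -
  define P where "P = prime_factors m"
  define q where "q = Lcm ((\<lambda>p. multiplicity p m + 1) ` prime_factors m)"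
  have pq: "prime q" using assms(3) q_def by simp
  have fin: "finite P" unfolding P_def by simp
  have pr: "\<forall>p\<in>P. prime p" unfolding P_def by auto
  obtain p0 where "prime p0" "p0 dvd m" using prime_factor_nat[of m] assms(1) by auto
  then have "p0 \<in> P" unfolding P_def using assms(1) by (simp add: in_prime_factors_iff)
  then have ne: "P \<noteq> {}" by auto
  have ex: "multiplicity p m = q - 1" if "p \<in> P" for p
  proof -
    have "multiplicity p m + 1 dvd q" unfolding q_def using that P_def by (intro dvd_Lcm) auto
    moreover have "multiplicity p m > 0" using that P_def prime_factors_multiplicity by auto
    ultimately have "multiplicity p m + 1 = q" using pq prime_nat_iff by (metis add_right_cancel add_0 less_not_refl)
    then show ?thesis by simp
  qed
  have q2: "q \<ge> 2" using pq prime_ge_2_nat by blast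
  have mP: "m = (\<Prod>p\<in>P. p^(q-1))"
  proof -
    have "m = (\<Prod>p\<in>P. p^multiplicity p m)" unfolding P_def using prime_factorization_nat assms(1) by simp
    also have "\<dots> = (\<Prod>p\<in>P. p^(q-1))" using ex by (intro prod.cong) auto
    finally show ?thesis .
  qed
  have sP: "divisor_sum m = (\<Prod>p\<in>P. cyc q p)"
  proof -
    have "divisor_sum m = (\<Prod>p\<in>P. divisor_sum (p^(q-1)))" using mP sigma_prod[OF fin pr] by simp
    also have "\<dots> = (\<Prod>p\<in>P. cyc q p)"
    proof (rule prod.cong)
      fix p assume "p \<in> P"
      then have "divisor_sum (p^(q-1)) = (\<Sum>i<Suc (q-1). p^i)" using pr sigma_pp by simp
      also have "Suc (q-1) = q" using q2 by simp
      finally show "divisor_sum (p^(q-1)) = cyc q p" unfolding cyc_def .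
    qed simp
    finally show ?thesis .
  qed
  have dv: "(\<Prod>p\<in>P. p^(q-1)) dvd (\<Prod>p\<in>P. cyc q p)" using assms(2) mP sP by simp
  show ?thesis
  proof (cases "q = 2")
    case True
    have "(\<Prod>p\<in>P. p) dvd (\<Prod>p\<in>P. p+1)"
    proof -
      have "cyc q p = p + 1" for p unfolding cyc_def True by (simp add: numeral_2_eq_2)
      then show ?thesis using dv True by simp
    qed
    then have "(\<Prod>p\<in>P. p) = 6" using case2[OF fin ne pr] by simp
    then show ?thesis using mP True by simp
  next
    case False
    then have "q \<ge> 3" using q2 by simp
    then show ?thesis using case_odd[OF fin ne pr pq _ dv] by simp
  qed
qed


end
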